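(* Let $\vec{G}$ be a finite directed rooted tree in which every edge is directed away from the root. Then $\operatorname{adim}(\vec{G}) = \operatorname{bdim}(\vec{G})$.
   Context: For a finite simple directed graph $\vec{G}$ and $u,v\in V(\vec{G})$, $d(u,v)$ is the length of a shortest directed path from $u$ to $v$, or $\infty$ if none exists; for a nonnegative integer $k$, $d_k(u,v)=\min(d(u,v),k+1)$. A function $f:V(\vec{G})\to\mathbb{Z}_{\geq 0}$ is a resolving broadcast if for any distinct $x,y\in V(\vec{G})$ there is $z$ with $f(z)>0$ and $d_{f(z)}(z,x)\neq d_{f(z)}(z,y)$. The broadcast dimension $\operatorname{bdim}(\vec{G})$ is the minimum of $\sum_{v}f(v)$ over all resolving broadcasts $f$. A set $A\subseteq V(\vec{G})$ is an adjacency resolving set if for any distinct $x,y$ there is $z\in A$ with $d_1(z,x)\neq d_1(z,y)$; the adjacency dimension $\operatorname{adim}(\vec{G})$ is the minimum cardinality of such a set (equivalently, the minimum of $\sum_v f(v)$ over resolving broadcasts with values in $\{0,1\}$). *)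

theory Defs
  imports Main "HOL-Library.Extended_Nat"
begin

definition simple_digraph :: "'a set \<Rightarrow> ('a \<times> 'a) set \<Rightarrow> bool" where
  "simple_digraph V E \<longleftrightarrow> finite V \<and> E \<subseteq> V \<times> V \<and> (\<forall>v. (v, v) \<notin> E)"

definition ddist :: "('a \<times> 'a) set \<Rightarrow> 'a \<Rightarrow> 'a \<Rightarrow> enat" where
  "ddist E u v = (if \<exists>n. (u, v) \<in> E ^^ n then enat (LEAST n. (u, v) \<in> E ^^ n) else \<infinity>)"

definition ddist_k :: "('a \<times> 'a) set \<Rightarrow> nat \<Rightarrow> 'a \<Rightarrow> 'a \<Rightarrow> enat" where
  "ddist_k E k u v = min (ddist E u v) (enat (k + 1))"

definition resolving_broadcast :: "'a set \<Rightarrow> ('a \<times> 'a) set \<Rightarrow> ('a \<Rightarrow> nat) \<Rightarrow> bool" where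
  "resolving_broadcast V E f \<longleftrightarrow>
     (\<forall>x\<in>V. \<forall>y\<in>V. x \<noteq> y \<longrightarrow>
        (\<exists>z\<in>V. f z > 0 \<and> ddist_k E (f z) z x \<noteq> ddist_k E (f z) z y))"

definition bdim :: "'a set \<Rightarrow> ('a \<times> 'a) set \<Rightarrow> nat" where
  "bdim V E = (LEAST s. \<exists>f. resolving_broadcast V E f \<and> (\<Sum>v\<in>V. f v) = s)"

definition adjacency_resolving :: "'a set \<Rightarrow> ('a \<times> 'a) set \<Rightarrow> 'a set \<Rightarrow> bool" where
  "adjacency_resolving V E A \<longleftrightarrow> A \<subseteq> V \<and>
     (\<forall>x\<in>V. \<forall>y\<in>V. x \<noteq> y \<longrightarrow> (\<exists>z\<in>A. ddist_k E 1 z x \<noteq> ddist_k E 1 z y))"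

definition adim :: "'a set \<Rightarrow> ('a \<times> 'a) set \<Rightarrow> nat" where
  "adim V E = (LEAST s. \<exists>A. adjacency_resolving V E A \<and> card A = s)"

definition out_tree :: "'a set \<Rightarrow> ('a \<times> 'a) set \<Rightarrow> 'a \<Rightarrow> bool" where
  "out_tree V E r \<longleftrightarrow> simple_digraph V E \<and> r \<in> V \<and>
     (\<forall>u. (u, r) \<notin> E) \<and>
     (\<forall>v\<in>V - {r}. \<exists>!u. (u, v) \<in> E) \<and>
     (\<forall>v\<in>V. (r, v) \<in> E\<^sup>*)"

end

theory Submission
  imports Defs
begin

lemma ddist_enat_iff:
  "ddist E u v = enat n \<longleftrightarrow> (u,v) \<in> E^^n \<and> (\<forall>m<n. (u,v) \<notin> E^^m)"
proof
  assume h: "ddist E u v = enat n"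
  then have ex: "\<exists>n. (u, v) \<in> E ^^ n" by (auto simp: ddist_def split: if_splits)
  with h have n: "n = (LEAST n. (u, v) \<in> E ^^ n)" by (simp add: ddist_def)
  show "(u,v) \<in> E^^n \<and> (\<forall>m<n. (u,v) \<notin> E^^m)"
    using n ex by (metis LeastI_ex not_less_Least)
next
  assume h: "(u,v) \<in> E^^n \<and> (\<forall>m<n. (u,v) \<notin> E^^m)"
  then have "(LEAST n. (u, v) \<in> E ^^ n) = n"
    by (metis (mono_tags, lifting) Least_equality not_less)
  then show "ddist E u v = enat n" using h by (auto simp: ddist_def)
qed

lemma ddist_le: "(u,v) \<in> E^^n \<Longrightarrow> ddist E u v \<le> enat n"
  unfolding ddist_def by (auto intro: Least_le)

lemma ddist_fin: "ddist E u v = enat a \<Longrightarrow> (u,v) \<in> E^^a"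
  using ddist_enat_iff by metis

lemma ddist_fin_le: "ddist E u v \<le> enat k \<Longrightarrow> \<exists>a. a \<le> k \<and> ddist E u v = enat a"
  by (metis enat_ile enat_ord_simps(1))

lemma ddist_tri: "ddist E u w \<le> ddist E u v + ddist E v w"
proof (cases "ddist E u v = \<infinity> \<or> ddist E v w = \<infinity>")
  case True then show ?thesis by auto
next
  case False
  then obtain a b where a: "ddist E u v = enat a" and b: "ddist E v w = enat b" by auto
  have "(u,w) \<in> E^^(a+b)" using ddist_fin[OF a] ddist_fin[OF b] by (auto simp: relpow_add)
  then have "ddist E u w \<le> enat (a+b)" by (rule ddist_le)
  then show ?thesis using a b by simp
qed

lemma ddist_self: "ddist E u u = 0"
  using ddist_enat_iff[of E u u 0] by (simp add: zero_enat_def)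

lemma ddist_zero_iff: "ddist E u v = 0 \<longleftrightarrow> u = v"
  using ddist_enat_iff[of E u v 0] by (auto simp: zero_enat_def)

lemma ddist_one_iff: "ddist E u v = 1 \<longleftrightarrow> (u,v) \<in> E \<and> u \<noteq> v"
  using ddist_enat_iff[of E u v 1] by (auto simp: one_enat_def)

lemma ddist_k_zero_iff: "ddist_k E k u v = 0 \<longleftrightarrow> u = v"
proof -
  have "min (ddist E u v) (enat (k+1)) = 0 \<longleftrightarrow> ddist E u v = 0"
    by (cases "ddist E u v") (auto simp: zero_enat_def min_def)
  then show ?thesis unfolding ddist_k_def using ddist_zero_iff by simp
qed

lemma ddist_k1_one_iff: "ddist_k E 1 u v = 1 \<longleftrightarrow> (u,v) \<in> E \<and> u \<noteq> v"
proof -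
  have "min (ddist E u v) (enat 2) = 1 \<longleftrightarrow> ddist E u v = 1"
    by (cases "ddist E u v") (auto simp: one_enat_def min_def)
  then show ?thesis unfolding ddist_k_def using ddist_one_iff by (simp add: numeral_2_eq_2)
qed

lemma ddist_k_big: "enat k < ddist E u v \<Longrightarrow> ddist_k E k u v = enat (k+1)"
  unfolding ddist_k_def by (metis Suc_ile_eq Suc_eq_plus1 min.absorb2)

lemma ddist_same_sets:
  "(\<And>n. (z,x) \<in> E^^n \<longleftrightarrow> (z,y) \<in> E^^n) \<Longrightarrow> ddist E z x = ddist E z y"
  unfolding ddist_def by simp

lemma relpow_Suc_iff: "(z,x) \<in> E^^Suc n \<longleftrightarrow> (\<exists>q. (z,q) \<in> E^^n \<and> (q,x) \<in> E)"
  by auto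

context
  fixes V :: "'a set" and E :: "('a \<times> 'a) set" and r :: 'a
  assumes T: "out_tree V E r"
begin

lemma EV: "(u,v) \<in> E \<Longrightarrow> u \<in> V \<and> v \<in> V"
  using T unfolding out_tree_def simple_digraph_def by auto

lemma noloop: "(u,u) \<notin> E"
  using T unfolding out_tree_def simple_digraph_def by auto

lemma noroot: "(u,r) \<notin> E"
  using T unfolding out_tree_def by auto

lemma finV: "finite V"
  using T unfolding out_tree_def simple_digraph_def by auto

definition par where "par x = (THE u. (u,x) \<in> E)"

lemma par: "x \<in> V \<Longrightarrow> x \<noteq> r \<Longrightarrow> (par x, x) \<in> E \<and> (\<forall>q. (q,x) \<in> E \<longrightarrow> q = par x)"
proof -
  assume "x \<in> V" "x \<noteq> r"
  then have "\<exists>!u. (u, x) \<in> E" using T unfolding out_tree_def by auto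
  then show ?thesis unfolding par_def by (metis theI)
qed

lemma par_uniq: "(q,x) \<in> E \<Longrightarrow> q = par x"
proof -
  assume e: "(q,x) \<in> E"
  then have "x \<in> V" "x \<noteq> r" using EV noroot by auto
  then show ?thesis using par e by blast
qed

lemma root_far: "z \<noteq> r \<Longrightarrow> ddist E z r = \<infinity>"
proof -
  assume z: "z \<noteq> r"
  have "(z,r) \<notin> E^^n" for n
    using z noroot by (cases n) (auto simp: relpow_Suc_iff)
  then show ?thesis unfolding ddist_def by auto
qed

lemma siblings:
  assumes "(p,x) \<in> E" "(p,y) \<in> E" "z \<noteq> x" "z \<noteq> y"
  shows "ddist E z x = ddist E z y"
proof (rule ddist_same_sets)
  fix n
  show "(z,x) \<in> E^^n \<longleftrightarrow> (z,y) \<in> E^^n"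
  proof (cases n)
    case 0 then show ?thesis using assms by auto
  next
    case (Suc m)
    have "(z,x) \<in> E^^Suc m \<longleftrightarrow> (z,p) \<in> E^^m"
      using assms par_uniq relpow_Suc_iff by metis
    moreover have "(z,y) \<in> E^^Suc m \<longleftrightarrow> (z,p) \<in> E^^m"
      using assms par_uniq relpow_Suc_iff by metis
    ultimately show ?thesis using Suc by simp
  qed
qed

lemma anc_chain:
  "(z,x) \<in> E^^b \<Longrightarrow> (w,x) \<in> E^^a \<Longrightarrow> b \<le> a \<Longrightarrow> (w,z) \<in> E^^(a-b)"
proof (induction b arbitrary: x a)
  case 0 then show ?case by simp
next
  case (Suc b)
  then obtain p where p: "(z,p) \<in> E^^b" "(p,x) \<in> E" by (auto simp: relpow_Suc_iff)
  obtain a' where a': "a = Suc a'" using Suc.prems(3) by (cases a) auto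
  then obtain q where q: "(w,q) \<in> E^^a'" "(q,x) \<in> E" using Suc.prems(2) by (auto simp: relpow_Suc_iff)
  have "q = p" using p q par_uniq by metis
  then show ?case using Suc.IH[OF p(1)] q a' Suc.prems(3) by auto
qed

lemma construct:
  assumes RB: "resolving_broadcast V E f"
  shows "\<exists>A. adjacency_resolving V E A \<and> card A \<le> (\<Sum>v\<in>V. f v)"
proof -
  define S where "S = {x\<in>V. 0 < f x}"
  define P where "P = {x\<in>V. f x = 0 \<and> x \<noteq> r \<and> f (par x) = 0 \<and>
                     (\<exists>z\<in>V. 0 < f z \<and> ddist E z x \<le> enat (f z))}"
  define A where "A = S \<union> P"
  define Q where "Q x zd \<longleftrightarrow> fst zd \<in> V \<and> 0 < f (fst zd) \<and> ddist E (fst zd) x = enat (snd zd)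
      \<and> 2 \<le> snd zd \<and> snd zd \<le> f (fst zd)
      \<and> (\<forall>w\<in>V. 0 < f w \<longrightarrow> ddist E w x \<le> enat (f w) \<longrightarrow> enat (snd zd) \<le> ddist E w x)" for x zd
  have finS: "finite S" using finV by (auto simp: S_def)
  have finP: "finite P" using finV by (auto simp: P_def)
  have exQ: "\<exists>zd. Q x zd" if x: "x \<in> P" for x
  proof -
    define D where "D = {d. \<exists>z\<in>V. 0 < f z \<and> ddist E z x = enat d \<and> d \<le> f z}"
    from x obtain z0 where z0: "z0 \<in> V" "0 < f z0" "ddist E z0 x \<le> enat (f z0)" by (auto simp: P_def)
    obtain d0 where d0h: "d0 \<le> f z0" "ddist E z0 x = enat d0" using ddist_fin_le[OF z0(3)] by blast
    have d0: "d0 \<in> D" unfolding D_def using z0(1,2) d0h by blast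
    let ?d = "Least (\<lambda>d. d \<in> D)"
    have "?d \<in> D" using d0 by (rule LeastI)
    then obtain z where z: "z \<in> V" "0 < f z" "ddist E z x = enat ?d" "?d \<le> f z" by (auto simp: D_def)
    have minD: "enat ?d \<le> ddist E w x" if wh: "w \<in> V" "0 < f w" "ddist E w x \<le> enat (f w)" for w
    proof -
      obtain a where a: "a \<le> f w" "ddist E w x = enat a" using ddist_fin_le[OF wh(3)] by blast
      have "a \<in> D" unfolding D_def using wh(1,2) a by blast
      then have "?d \<le> a" by (rule Least_le)
      then show ?thesis using a by simp
    qed
    have ne0: "?d \<noteq> 0"
    proof
      assume "?d = 0"
      then have "ddist E z x = 0" using z by (simp add: zero_enat_def)
      then have "z = x" using ddist_zero_iff by metis
      then show False using z x by (auto simp: P_def)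
    qed
    have ne1: "?d \<noteq> 1"
    proof
      assume "?d = 1"
      then have "ddist E z x = 1" using z by (simp add: one_enat_def)
      then have "(z,x) \<in> E" using ddist_one_iff by metis
      then have "z = par x" using par_uniq by metis
      then show False using z x by (auto simp: P_def)
    qed
    have "Q x (z, ?d)" unfolding Q_def using z minD ne0 ne1 by auto
    then show ?thesis by blast
  qed
  then obtain g where g: "\<And>x. x \<in> P \<Longrightarrow> Q x (g x)" by metis
  have key: "ddist E w y \<le> ddist E w x"
    if xy: "x \<in> P" "y \<in> P" "g x = g y" and w: "w \<in> V" "0 < f w" "ddist E w x \<le> enat (f w)" for x y w
  proof -
    obtain z d where zd: "g x = (z,d)" by (cases "g x")
    then have Qx: "Q x (z,d)" and Qy: "Q y (z,d)" using g xy by metis+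
    obtain a where a: "ddist E w x = enat a" using ddist_fin_le[OF w(3)] by blast
    have "enat d \<le> enat a" using Qx w a unfolding Q_def by auto
    then have da: "d \<le> a" by simp
    have "(z,x) \<in> E^^d" using Qx ddist_fin unfolding Q_def by auto
    moreover have "(w,x) \<in> E^^a" using ddist_fin[OF a] .
    ultimately have "(w,z) \<in> E^^(a-d)" using anc_chain da by blast
    then have wz: "ddist E w z \<le> enat (a-d)" by (rule ddist_le)
    have zy: "ddist E z y = enat d" using Qy unfolding Q_def by auto
    have "ddist E w y \<le> ddist E w z + ddist E z y" by (rule ddist_tri)
    also have "\<dots> \<le> enat (a-d) + enat d" unfolding zy by (rule add_right_mono[OF wz])
    also have "\<dots> = enat a" using da by simp
    finally show ?thesis using a by simp
  qed
  have inj: "inj_on g P"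
  proof (rule inj_onI)
    fix x y assume xy: "x \<in> P" "y \<in> P" "g x = g y"
    show "x = y"
    proof (rule ccontr)
      assume "x \<noteq> y"
      then obtain w where w: "w \<in> V" "0 < f w" "ddist_k E (f w) w x \<noteq> ddist_k E (f w) w y"
        using RB xy unfolding resolving_broadcast_def P_def by blast
      have "ddist_k E (f w) w x = ddist_k E (f w) w y"
      proof (cases "ddist E w x \<le> enat (f w)")
        case True
        then have 1: "ddist E w y \<le> ddist E w x" using key xy w by blast
        then have "ddist E w y \<le> enat (f w)" using True by (rule order_trans)
        then have "ddist E w x \<le> ddist E w y" using key[of y x w] xy w by auto
        with 1 show ?thesis unfolding ddist_k_def by simp
      next
        case False
        show ?thesis
        proof (cases "ddist E w y \<le> enat (f w)")
          case True
          then have "ddist E w x \<le> ddist E w y" using key[of y x w] xy w by auto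
          then show ?thesis using True False by (meson order_trans)
        next
          case False2: False
          show ?thesis using False False2 ddist_k_big by (metis not_le)
        qed
      qed
      with w show False by simp
    qed
  qed
  have "g ` P \<subseteq> Sigma S (\<lambda>z. {2..f z})"
  proof
    fix p assume "p \<in> g ` P"
    then obtain x where x: "x \<in> P" "p = g x" by blast
    have "fst p \<in> S" "snd p \<in> {2..f (fst p)}" using g[OF x(1)] x(2) unfolding Q_def S_def by auto
    then show "p \<in> Sigma S (\<lambda>z. {2..f z})" by (cases p) auto
  qed
  then have "card (g ` P) \<le> card (Sigma S (\<lambda>z. {2..f z}))"
    using finS by (intro card_mono) auto
  also have "\<dots> = (\<Sum>z\<in>S. card {2..f z})" using finS by (simp add: card_SigmaI)
  also have "\<dots> = (\<Sum>z\<in>S. f z - 1)" by simp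
  finally have cP: "card P \<le> (\<Sum>z\<in>S. f z - 1)" using card_image[OF inj] by simp
  have "card A \<le> card S + card P" unfolding A_def by (rule card_Un_le)
  also have "\<dots> \<le> (\<Sum>z\<in>S. 1) + (\<Sum>z\<in>S. f z - 1)" using cP by simp
  also have "\<dots> = (\<Sum>z\<in>S. f z)" by (subst sum.distrib[symmetric], rule sum.cong) (auto simp: S_def)
  also have "\<dots> = (\<Sum>z\<in>V. f z)" using finV by (intro sum.mono_neutral_left) (auto simp: S_def)
  finally have cA: "card A \<le> (\<Sum>z\<in>V. f z)" .
  have AV: "A \<subseteq> V" by (auto simp: A_def S_def P_def)
  have f0: "f x = 0" if "x \<in> V" "x \<notin> A" for x using that by (auto simp: A_def S_def)
  have out: "(x \<noteq> r \<and> par x \<in> A) \<or> (\<forall>w\<in>V. 0 < f w \<longrightarrow> enat (f w) < ddist E w x)"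
    if x: "x \<in> V" "x \<notin> A" for x
  proof (cases "x = r")
    case True
    have "enat (f w) < ddist E w x" if "w \<in> V" "0 < f w" for w
    proof -
      have "w \<noteq> r" using that f0[OF x] True by auto
      then show ?thesis using root_far True by simp
    qed
    then show ?thesis by blast
  next
    case False
    show ?thesis
    proof (cases "par x \<in> A")
      case True then show ?thesis using False by blast
    next
      case pA: False
      have "par x \<in> V" using par[OF x(1) False] EV by blast
      then have "f (par x) = 0" using f0 pA by blast
      then have "\<not> (\<exists>z\<in>V. 0 < f z \<and> ddist E z x \<le> enat (f z))"
        using x False f0[OF x] by (auto simp: A_def P_def)
      then show ?thesis by (auto simp: not_le)
    qed
  qed
  have sib: "\<exists>z\<in>A. ddist_k E 1 z x \<noteq> ddist_k E 1 z y"
    if xy: "x \<in> V" "y \<in> V" "x \<noteq> y" "x \<notin> A" "y \<notin> A" "x \<noteq> r" "par x \<in> A" for x y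
  proof (rule bexI[of _ "par x"])
    have e: "(par x, x) \<in> E" using par xy by blast
    then have 1: "ddist_k E 1 (par x) x = 1" using ddist_k1_one_iff noloop by metis
    show "ddist_k E 1 (par x) x \<noteq> ddist_k E 1 (par x) y"
    proof
      assume "ddist_k E 1 (par x) x = ddist_k E 1 (par x) y"
      then have "(par x, y) \<in> E" using 1 ddist_k1_one_iff by metis
      have "ddist_k E (f w) w x = ddist_k E (f w) w y" if "w \<in> V" "0 < f w" for w
      proof -
        have "w \<noteq> x" "w \<noteq> y" using that f0 xy by auto
        then show ?thesis unfolding ddist_k_def using siblings[OF e \<open>(par x, y) \<in> E\<close>] by simp
      qed
      then show False using RB xy unfolding resolving_broadcast_def by blast
    qed
  qed (use xy in auto)
  have "adjacency_resolving V E A"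
    unfolding adjacency_resolving_def
  proof (intro conjI AV ballI impI)
    fix x y assume xy: "x \<in> V" "y \<in> V" "x \<noteq> y"
    show "\<exists>z\<in>A. ddist_k E 1 z x \<noteq> ddist_k E 1 z y"
    proof (cases "x \<in> A")
      case True then show ?thesis using xy ddist_k_zero_iff by metis
    next
      case xA: False
      show ?thesis
      proof (cases "y \<in> A")
        case True then show ?thesis using xy ddist_k_zero_iff by metis
      next
        case yA: False
        show ?thesis
        proof (cases "x \<noteq> r \<and> par x \<in> A")
          case True then show ?thesis using sib xy xA yA by blast
        next
          case nx: False
          show ?thesis
          proof (cases "y \<noteq> r \<and> par y \<in> A")
            case True then show ?thesis using sib[of y x] xy xA yA by (metis (no_types, lifting))
          next
            case ny: False
            have fx: "\<forall>w\<in>V. 0 < f w \<longrightarrow> enat (f w) < ddist E w x" using out xy xA nx by blast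
            have fy: "\<forall>w\<in>V. 0 < f w \<longrightarrow> enat (f w) < ddist E w y" using out xy yA ny by blast
            have "ddist_k E (f w) w x = ddist_k E (f w) w y" if "w \<in> V" "0 < f w" for w
              using fx fy that ddist_k_big by metis
            then show ?thesis using RB xy unfolding resolving_broadcast_def by blast
          qed
        qed
      qed
    qed
  qed
  then show ?thesis using cA by blast
qed

end


theorem theorem1p14:
  fixes V :: "'a set" and E :: "('a \<times> 'a) set" and r :: 'a
  assumes "out_tree V E r"
  shows "adim V E = bdim V E"
proof -
  have rb1: "resolving_broadcast V E (\<lambda>_. 1)"
    unfolding resolving_broadcast_def using ddist_k_zero_iff by (metis zero_less_one)
  have "\<exists>s. \<exists>f. resolving_broadcast V E f \<and> (\<Sum>v\<in>V. f v) = s" using rb1 by blast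
  then have "\<exists>f. resolving_broadcast V E f \<and> (\<Sum>v\<in>V. f v) = bdim V E"
    unfolding bdim_def by (rule LeastI_ex)
  then obtain f0 where f0: "resolving_broadcast V E f0" "(\<Sum>v\<in>V. f0 v) = bdim V E"
    by blast
  obtain A where A: "adjacency_resolving V E A" "card A \<le> (\<Sum>v\<in>V. f0 v)"
    using construct[OF assms f0(1)] by blast
  have "adim V E \<le> card A" unfolding adim_def using A(1) by (blast intro: Least_le)
  then have le1: "adim V E \<le> bdim V E" using A(2) f0(2) by simp
  have ar: "adjacency_resolving V E V"
    unfolding adjacency_resolving_def
  proof (intro conjI subset_refl ballI impI)
    fix x y assume "x \<in> V" "y \<in> V" "x \<noteq> y"
    then show "\<exists>z\<in>V. ddist_k E 1 z x \<noteq> ddist_k E 1 z y"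
      using ddist_k_zero_iff[of E 1 x x] ddist_k_zero_iff[of E 1 x y] by metis
  qed
  then have "\<exists>s. \<exists>A. adjacency_resolving V E A \<and> card A = s" by blast
  then have "\<exists>A. adjacency_resolving V E A \<and> card A = adim V E"
    unfolding adim_def by (rule LeastI_ex)
  then obtain A0 where A0: "adjacency_resolving V E A0" "card A0 = adim V E" by blast
  have A0V: "A0 \<subseteq> V" using A0 by (simp add: adjacency_resolving_def)
  define g where "g z = (if z \<in> A0 then 1 else 0::nat)" for z
  have "resolving_broadcast V E g"
    unfolding resolving_broadcast_def
  proof (intro ballI impI)
    fix x y assume xy: "x \<in> V" "y \<in> V" "x \<noteq> y"
    then obtain z where z: "z \<in> A0" "ddist_k E 1 z x \<noteq> ddist_k E 1 z y"
      using A0(1) unfolding adjacency_resolving_def by blast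
    have "g z = 1" using z(1) by (simp add: g_def)
    show "\<exists>z\<in>V. 0 < g z \<and> ddist_k E (g z) z x \<noteq> ddist_k E (g z) z y"
    proof (rule bexI[of _ z])
      show "z \<in> V" using z(1) A0V by blast
    qed (use z \<open>g z = 1\<close> in simp)
  qed
  moreover have "(\<Sum>v\<in>V. g v) = card A0"
  proof -
    have finV: "finite V" using assms unfolding out_tree_def simple_digraph_def by blast
    have "(\<Sum>v\<in>V. g v) = (\<Sum>v\<in>A0. g v)"
      using finV A0V by (intro sum.mono_neutral_right) (auto simp: g_def)
    also have "\<dots> = (\<Sum>v\<in>A0. 1)" by (rule sum.cong) (auto simp: g_def)
    also have "\<dots> = card A0" by simp
    finally show ?thesis .
  qed
  ultimately have "bdim V E \<le> card A0" unfolding bdim_def by (blast intro: Least_le)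
  with le1 A0(2) show ?thesis by simp
qed

end
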